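(* Let $V$ be a Yetter-Drinfeld module over $H=B(n,w,\gamma)$ and let $v\in V$ be a standard element of type $(\alpha,\beta,x^rg^i)$ with $\alpha,\beta\in\Bbbk^*$, $r,i\in\mathbb{Z}$. For $k\ge0$ let $V(v,k)$ be the linear span of $v,y\cdot v,\dots,y^k\cdot v$. Then for every $k\ge0$: (1) $x\cdot(y^k\cdot v)=\alpha(y^k\cdot v)$ and $g\cdot(y^k\cdot v)=\beta\gamma^{-k}(y^k\cdot v)$; (2) $V(v,k)$ is a subcomodule of $V$; (3) if $y^{k+1}\cdot v\in V(v,k)$, then $V(v,k)$ is a Yetter-Drinfeld submodule of $V$.
   Context: $\Bbbk$ is an algebraically closed field of characteristic $0$; $n,w$ positive integers, $\gamma$ a primitive $n$-th root of unity. $H=B(n,w,\gamma)$ is the Hopf algebra generated by $x^{\pm1},g,y$ with relations $xx^{-1}=x^{-1}x=1$, $xg=gx$, $xy=yx$, $yg=\gamma gy$, $y^n=1-x^w=1-g^n$, with $\Delta(x)=x\otimes x$, $\Delta(g)=g\otimes g$, $\Delta(y)=y\otimes g+1\otimes y$, $\varepsilon(x)=\varepsilon(g)=1$, $\varepsilon(y)=0$, $S(x)=x^{-1}$, $S(g)=g^{-1}$, $S(y)=-yg^{-1}$; $G(H)=\{g^jx^k\}$. A (left-left) Yetter-Drinfeld module is a left $H$-module, left $H$-comodule $(V,\cdot,\delta)$ with $\delta(h\cdot v)=h_{(1)}v_{(-1)}S(h_{(3)})\otimes h_{(2)}\cdot v_{(0)}$. A nonzero $v\in V$ is a standard element of type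 $(\alpha,\beta,h)$ if $h\in G(H)$, $\alpha,\beta\in\Bbbk^*$, $x\cdot v=\alpha v$, $g\cdot v=\beta v$, $\delta(v)=h\otimes v$. *)

theory Defs
  imports "HOL-Computational_Algebra.Polynomial"
begin

text \<open>H has the k-basis y^a g^b x^c with 0 <= a < n, 0 <= b < n, c in Z
  (recall g^n = x^w, y^n = 1 - x^w, yg = gamma gy).
  Elements of H are finitely supported functions bidx => k (coefficients in this basis),
  elements of H (x) H are functions on pairs of indices, and an element of H (x) V
  is written as the family of its V-valued coefficients.\<close>

type_synonym bidx = "nat \<times> nat \<times> int"

definition validx :: "nat \<Rightarrow> bidx \<Rightarrow> bool" where
  "validx n i \<longleftrightarrow> fst i < n \<and> fst (snd i) < n"

definition hsupp :: "('a \<Rightarrow> 'k::zero) \<Rightarrow> 'a set" where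
  "hsupp f = {t. f t \<noteq> 0}"

definition bas :: "bidx \<Rightarrow> bidx \<Rightarrow> 'k::field" where
  "bas i = (\<lambda>t. if t = i then 1 else 0)"

text \<open>The element y^A g^B x^C of H (A >= 0, B, C integers), written in the basis:
  y^A = y^(A mod n) (1 - x^w)^(A div n) and g^B = g^(B mod n) x^(w (B div n)).\<close>
definition mono :: "nat \<Rightarrow> nat \<Rightarrow> nat \<Rightarrow> int \<Rightarrow> int \<Rightarrow> bidx \<Rightarrow> 'k::field" where
  "mono n w A B C = (\<lambda>t. \<Sum>k\<le>A div n. (-1)^k * of_nat (A div n choose k) *
      bas (A mod n, nat (B mod int n), C + int w * (B div int n) + int w * int k) t)"

text \<open>Product of two basis elements: (y^a g^b x^c)(y^a' g^b' x^c') = gamma^(-b a') y^(a+a') g^(b+b') x^(c+c').\<close>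
definition bmul :: "nat \<Rightarrow> nat \<Rightarrow> 'k::field \<Rightarrow> bidx \<Rightarrow> bidx \<Rightarrow> bidx \<Rightarrow> 'k" where
  "bmul n w \<gamma> i j = (case i of (a, b, c) \<Rightarrow> case j of (a', b', c') \<Rightarrow>
      (\<lambda>t. (inverse \<gamma>) ^ (b * a') * mono n w (a + a') (int (b + b')) (c + c') t))"

definition hmul :: "nat \<Rightarrow> nat \<Rightarrow> 'k::field \<Rightarrow> (bidx \<Rightarrow> 'k) \<Rightarrow> (bidx \<Rightarrow> 'k) \<Rightarrow> bidx \<Rightarrow> 'k" where
  "hmul n w \<gamma> f h = (\<lambda>t. \<Sum>i\<in>hsupp f. \<Sum>j\<in>hsupp h. f i * h j * bmul n w \<gamma> i j t)"

definition hone :: "nat \<Rightarrow> nat \<Rightarrow> bidx \<Rightarrow> 'k::field" where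
  "hone n w = mono n w 0 0 0"

definition hpow :: "nat \<Rightarrow> nat \<Rightarrow> 'k::field \<Rightarrow> (bidx \<Rightarrow> 'k) \<Rightarrow> nat \<Rightarrow> bidx \<Rightarrow> 'k" where
  "hpow n w \<gamma> f k = (hmul n w \<gamma> f ^^ k) (hone n w)"

definition hx :: "nat \<Rightarrow> nat \<Rightarrow> bidx \<Rightarrow> 'k::field" where "hx n w = mono n w 0 0 1"
definition hg :: "nat \<Rightarrow> nat \<Rightarrow> bidx \<Rightarrow> 'k::field" where "hg n w = mono n w 0 1 0"
definition hy :: "nat \<Rightarrow> nat \<Rightarrow> bidx \<Rightarrow> 'k::field" where "hy n w = mono n w 1 0 0"

definition tens :: "(bidx \<Rightarrow> 'k::field) \<Rightarrow> (bidx \<Rightarrow> 'k) \<Rightarrow> bidx \<times> bidx \<Rightarrow> 'k" where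
  "tens f h = (\<lambda>(p, q). f p * h q)"

definition mul2 :: "nat \<Rightarrow> nat \<Rightarrow> 'k::field \<Rightarrow> (bidx \<times> bidx \<Rightarrow> 'k) \<Rightarrow> (bidx \<times> bidx \<Rightarrow> 'k)
    \<Rightarrow> bidx \<times> bidx \<Rightarrow> 'k" where
  "mul2 n w \<gamma> F G = (\<lambda>(t, u). \<Sum>P\<in>hsupp F. \<Sum>Q\<in>hsupp G.
      F P * G Q * bmul n w \<gamma> (fst P) (fst Q) t * bmul n w \<gamma> (snd P) (snd Q) u)"

definition pow2 :: "nat \<Rightarrow> nat \<Rightarrow> 'k::field \<Rightarrow> (bidx \<times> bidx \<Rightarrow> 'k) \<Rightarrow> nat \<Rightarrow> bidx \<times> bidx \<Rightarrow> 'k" where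
  "pow2 n w \<gamma> F k = (mul2 n w \<gamma> F ^^ k) (tens (hone n w) (hone n w))"

text \<open>Comultiplication on basis elements: Delta is the algebra map with
  Delta(y) = y (x) g + 1 (x) y and Delta(g^b x^c) = g^b x^c (x) g^b x^c.\<close>
definition cop :: "nat \<Rightarrow> nat \<Rightarrow> 'k::field \<Rightarrow> bidx \<Rightarrow> bidx \<times> bidx \<Rightarrow> 'k" where
  "cop n w \<gamma> i = (case i of (a, b, c) \<Rightarrow>
      mul2 n w \<gamma>
        (pow2 n w \<gamma> (\<lambda>P. tens (hy n w) (hg n w) P + tens (hone n w) (hy n w) P) a)
        (tens (mono n w 0 (int b) c) (mono n w 0 (int b) c)))"

text \<open>(Delta (x) id) Delta on basis elements.\<close>
definition cop2 :: "nat \<Rightarrow> nat \<Rightarrow> 'k::field \<Rightarrow> bidx \<Rightarrow> bidx \<times> bidx \<times> bidx \<Rightarrow> 'k" where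
  "cop2 n w \<gamma> l = (\<lambda>(p, q, r). \<Sum>P\<in>hsupp (cop n w \<gamma> l).
      if snd P = r then cop n w \<gamma> l P * cop n w \<gamma> (fst P) (p, q) else 0)"

definition eps :: "bidx \<Rightarrow> 'k::field" where
  "eps i = (if fst i = 0 then 1 else 0)"

text \<open>Antipode on basis elements: S(y^a g^b x^c) = S(g^b x^c) S(y)^a = g^(-b) x^(-c) (- y g^(-1))^a.\<close>
definition antip :: "nat \<Rightarrow> nat \<Rightarrow> 'k::field \<Rightarrow> bidx \<Rightarrow> bidx \<Rightarrow> 'k" where
  "antip n w \<gamma> i = (case i of (a, b, c) \<Rightarrow>
      hmul n w \<gamma> (mono n w 0 (- int b) (- c))
        (hpow n w \<gamma> (\<lambda>t. - hmul n w \<gamma> (hy n w) (mono n w 0 (-1) 0) t) a))"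

text \<open>A left H-module structure on the k-vector space (V, scale): rho i is the action of the
  basis element with index i. The action of an arbitrary element h of H is hact.\<close>
definition hact :: "('k::field \<Rightarrow> 'v::ab_group_add \<Rightarrow> 'v) \<Rightarrow> (bidx \<Rightarrow> 'v \<Rightarrow> 'v)
    \<Rightarrow> (bidx \<Rightarrow> 'k) \<Rightarrow> 'v \<Rightarrow> 'v" where
  "hact scale \<rho> h v = (\<Sum>t\<in>hsupp h. scale (h t) (\<rho> t v))"

definition hmodule :: "('k::field \<Rightarrow> 'v::ab_group_add \<Rightarrow> 'v) \<Rightarrow> nat \<Rightarrow> nat \<Rightarrow> 'k
    \<Rightarrow> (bidx \<Rightarrow> 'v \<Rightarrow> 'v) \<Rightarrow> bool" where
  "hmodule scale n w \<gamma> \<rho> \<longleftrightarrow>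
     (\<forall>i. validx n i \<longrightarrow> Vector_Spaces.linear scale scale (\<rho> i)) \<and>
     (\<forall>v. hact scale \<rho> (hone n w) v = v) \<and>
     (\<forall>i j v. validx n i \<longrightarrow> validx n j \<longrightarrow>
        \<rho> i (\<rho> j v) = hact scale \<rho> (bmul n w \<gamma> i j) v)"

text \<open>A left H-comodule structure: delta(v) = sum_i e_i (x) phi i v, e_i the basis elements.\<close>
definition hcomodule :: "('k::field \<Rightarrow> 'v::ab_group_add \<Rightarrow> 'v) \<Rightarrow> nat \<Rightarrow> nat \<Rightarrow> 'k
    \<Rightarrow> (bidx \<Rightarrow> 'v \<Rightarrow> 'v) \<Rightarrow> bool" where
  "hcomodule scale n w \<gamma> \<phi> \<longleftrightarrow>
     (\<forall>i. Vector_Spaces.linear scale scale (\<phi> i)) \<and>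
     (\<forall>i v. \<not> validx n i \<longrightarrow> \<phi> i v = 0) \<and>
     (\<forall>v. finite {i. \<phi> i v \<noteq> 0}) \<and>
     (\<forall>v. (\<Sum>i\<in>{i. \<phi> i v \<noteq> 0}. scale (eps i) (\<phi> i v)) = v) \<and>
     (\<forall>v p q. (\<Sum>i\<in>{i. \<phi> i v \<noteq> 0}. scale (cop n w \<gamma> i (p, q)) (\<phi> i v)) = \<phi> q (\<phi> p v))"

text \<open>Left-left Yetter-Drinfeld compatibility
  delta(h.v) = h1 v(-1) S(h3) (x) h2.v(0), for h running through the basis of H
  (both sides are linear in h).\<close>
definition yd_module :: "('k::field \<Rightarrow> 'v::ab_group_add \<Rightarrow> 'v) \<Rightarrow> nat \<Rightarrow> nat \<Rightarrow> 'k
    \<Rightarrow> (bidx \<Rightarrow> 'v \<Rightarrow> 'v) \<Rightarrow> (bidx \<Rightarrow> 'v \<Rightarrow> 'v) \<Rightarrow> bool" where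
  "yd_module scale n w \<gamma> \<rho> \<phi> \<longleftrightarrow>
     hmodule scale n w \<gamma> \<rho> \<and> hcomodule scale n w \<gamma> \<phi> \<and>
     (\<forall>l v t. validx n l \<longrightarrow>
        \<phi> t (\<rho> l v) =
          (\<Sum>(p, q, r)\<in>hsupp (cop2 n w \<gamma> l). \<Sum>s\<in>{s. \<phi> s v \<noteq> 0}.
             scale (cop2 n w \<gamma> l (p, q, r) *
                    hmul n w \<gamma> (bmul n w \<gamma> p s) (antip n w \<gamma> r) t)
                   (\<rho> q (\<phi> s v))))"

definition subcomodule :: "('k::field \<Rightarrow> 'v::ab_group_add \<Rightarrow> 'v) \<Rightarrow> (bidx \<Rightarrow> 'v \<Rightarrow> 'v)
    \<Rightarrow> 'v set \<Rightarrow> bool" where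
  "subcomodule scale \<phi> W \<longleftrightarrow> module.subspace scale W \<and> (\<forall>i. \<forall>u\<in>W. \<phi> i u \<in> W)"

definition yd_submodule :: "('k::field \<Rightarrow> 'v::ab_group_add \<Rightarrow> 'v) \<Rightarrow> nat
    \<Rightarrow> (bidx \<Rightarrow> 'v \<Rightarrow> 'v) \<Rightarrow> (bidx \<Rightarrow> 'v \<Rightarrow> 'v) \<Rightarrow> 'v set \<Rightarrow> bool" where
  "yd_submodule scale n \<rho> \<phi> W \<longleftrightarrow>
     subcomodule scale \<phi> W \<and> (\<forall>i. validx n i \<longrightarrow> (\<forall>u\<in>W. \<rho> i u \<in> W))"

definition standard_element :: "('k::field \<Rightarrow> 'v::ab_group_add \<Rightarrow> 'v) \<Rightarrow> nat \<Rightarrow> nat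
    \<Rightarrow> (bidx \<Rightarrow> 'v \<Rightarrow> 'v) \<Rightarrow> (bidx \<Rightarrow> 'v \<Rightarrow> 'v) \<Rightarrow> 'v \<Rightarrow> 'k \<Rightarrow> 'k \<Rightarrow> int \<Rightarrow> int \<Rightarrow> bool" where
  "standard_element scale n w \<rho> \<phi> v \<alpha> \<beta> r i \<longleftrightarrow>
     v \<noteq> 0 \<and> \<alpha> \<noteq> 0 \<and> \<beta> \<noteq> 0 \<and>
     hact scale \<rho> (hx n w) v = scale \<alpha> v \<and>
     hact scale \<rho> (hg n w) v = scale \<beta> v \<and>
     (\<forall>j. \<phi> j v = scale (mono n w 0 i r j) v)"

end

theory Submission
  imports Defs
begin


lemma nz_sum_ex: "sum g A \<noteq> (0::'a::comm_monoid_add) \<Longrightarrow> \<exists>a\<in>A. g a \<noteq> 0"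
  by (meson sum.not_neutral_contains_not_neutral)

lemma mono_nz:
  assumes "mono n w A B C t \<noteq> (0::'k::field)"
  shows "\<exists>k\<le>A div n. t = (A mod n, nat (B mod int n), C + int w * (B div int n) + int w * int k)"
proof -
  from assms have "(\<Sum>k\<le>A div n. (-1)^k * of_nat (A div n choose k) *
      bas (A mod n, nat (B mod int n), C + int w * (B div int n) + int w * int k) t) \<noteq> (0::'k)"
    by (simp add: mono_def)
  from nz_sum_ex[OF this] show ?thesis by (auto simp: bas_def split: if_splits)
qed

lemma mono_nz_valid:
  assumes "n > 0" "mono n w A B C t \<noteq> (0::'k::field)"
  shows "validx n t \<and> fst t \<le> A \<and> fst t = A mod n"
proof -
  obtain k where "t = (A mod n, nat (B mod int n), C + int w * (B div int n) + int w * int k)"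
    using mono_nz[OF assms(2)] by blast
  then show ?thesis using assms(1) by (auto simp: validx_def nat_less_iff)
qed

lemma mono_fin: "finite (hsupp (mono n w A B C :: bidx \<Rightarrow> 'k::field))"
proof -
  have "hsupp (mono n w A B C :: bidx \<Rightarrow> 'k) \<subseteq>
     (\<lambda>k. (A mod n, nat (B mod int n), C + int w * (B div int n) + int w * int k)) ` {..A div n}"
    using mono_nz[where 'k='k] by (fastforce simp: hsupp_def)
  then show ?thesis by (rule finite_subset) auto
qed

lemma mono_small:
  assumes "A < n" "0 \<le> B" "B < int n"
  shows "mono n w A B C = bas (A, nat B, C)"
  using assms by (simp add: mono_def)

lemma mono_0: "mono n w 0 B C = bas (0, nat (B mod int n), C + int w * (B div int n))"
  by (simp add: mono_def)

lemma bmul_eq: "bmul n w \<gamma> (a, b, c) (a', b', c') =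
   (\<lambda>t. inverse \<gamma> ^ (b * a') * mono n w (a + a') (int (b + b')) (c + c') t)"
  by (simp add: bmul_def)

lemma bmul_nz:
  assumes "n > 0" "bmul n w \<gamma> i j t \<noteq> (0::'k::field)"
  shows "validx n t \<and> fst t \<le> fst i + fst j"
proof -
  obtain a b c a' b' c' where ij: "i = (a,b,c)" "j = (a',b',c')" by (cases i, cases j) auto
  from assms(2) have "mono n w (a + a') (int (b + b')) (c + c') t \<noteq> (0::'k)"
    by (simp add: ij bmul_eq)
  from mono_nz_valid[OF assms(1) this] show ?thesis by (simp add: ij)
qed

lemma bmul_fin: "finite (hsupp (bmul n w \<gamma> i j :: bidx \<Rightarrow> 'k::field))"
proof -
  obtain a b c a' b' c' where ij: "i = (a,b,c)" "j = (a',b',c')" by (cases i, cases j) auto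
  have "hsupp (bmul n w \<gamma> i j :: bidx \<Rightarrow> 'k) \<subseteq> hsupp (mono n w (a + a') (int (b + b')) (c + c') :: bidx \<Rightarrow> 'k)"
    by (auto simp: ij bmul_eq hsupp_def)
  then show ?thesis using mono_fin finite_subset by blast
qed

lemma hsupp_bas: "hsupp (bas i :: bidx \<Rightarrow> 'k::field) = {i}"
  by (auto simp: hsupp_def bas_def)

lemma hone_bas: "hone n w = bas (0,0,0)"
  by (simp add: hone_def mono_0)

lemma hx_bas: "hx n w = bas (0,0,1)"
  by (simp add: hx_def mono_0)

lemma hg_bas: "hg n w = bas (0, nat (1 mod int n), int w * (1 div int n))"
  by (simp add: hg_def mono_0)

lemma hg_bas2: "n \<ge> 2 \<Longrightarrow> hg n w = bas (0, 1, 0)"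
  by (simp add: hg_def mono_small)

lemma hy_bas2: "n \<ge> 2 \<Longrightarrow> hy n w = bas (1, 0, 0)"
  by (simp add: hy_def mono_small)

lemma hy_supp:
  assumes "n > 0"
  shows "finite (hsupp (hy n w :: bidx \<Rightarrow> 'k::field))"
    "t \<in> hsupp (hy n w :: bidx \<Rightarrow> 'k) \<Longrightarrow> validx n t \<and> fst t = 1 mod n \<and> fst (snd t) = 0"
proof -
  show "finite (hsupp (hy n w :: bidx \<Rightarrow> 'k::field))" by (simp add: hy_def mono_fin)
  assume "t \<in> hsupp (hy n w :: bidx \<Rightarrow> 'k)"
  then have "mono n w 1 0 0 t \<noteq> (0::'k)" by (simp add: hsupp_def hy_def)
  with mono_nz[OF this] mono_nz_valid[OF assms this] show "validx n t \<and> fst t = 1 mod n \<and> fst (snd t) = 0"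
    by auto
qed

lemma hpow_Suc: "hpow n w \<gamma> f (Suc k) = hmul n w \<gamma> f (hpow n w \<gamma> f k)"
  by (simp add: hpow_def)

lemma hpow_0: "hpow n w \<gamma> f 0 = hone n w"
  by (simp add: hpow_def)

lemma hmul_supp:
  assumes "n > 0" "finite (hsupp f)" "finite (hsupp h)"
  shows "finite (hsupp (hmul n w \<gamma> f h :: bidx \<Rightarrow> 'k::field))"
    "\<forall>t\<in>hsupp (hmul n w \<gamma> f h :: bidx \<Rightarrow> 'k). validx n t"
proof -
  have sub: "hsupp (hmul n w \<gamma> f h :: bidx \<Rightarrow> 'k) \<subseteq> (\<Union>i\<in>hsupp f. \<Union>j\<in>hsupp h. hsupp (bmul n w \<gamma> i j))"
  proof
    fix t assume "t \<in> hsupp (hmul n w \<gamma> f h :: bidx \<Rightarrow> 'k)"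
    then have "(\<Sum>i\<in>hsupp f. \<Sum>j\<in>hsupp h. f i * h j * bmul n w \<gamma> i j t) \<noteq> 0"
      by (simp add: hsupp_def hmul_def)
    then obtain i where i: "i \<in> hsupp f" "(\<Sum>j\<in>hsupp h. f i * h j * bmul n w \<gamma> i j t) \<noteq> 0"
      using nz_sum_ex by blast
    then obtain j where j: "j \<in> hsupp h" "f i * h j * bmul n w \<gamma> i j t \<noteq> 0"
      using nz_sum_ex by blast
    show "t \<in> (\<Union>i\<in>hsupp f. \<Union>j\<in>hsupp h. hsupp (bmul n w \<gamma> i j))"
    proof (rule UN_I[OF i(1)], rule UN_I[OF j(1)])
      show "t \<in> hsupp (bmul n w \<gamma> i j)" using j(2) by (auto simp: hsupp_def)
    qed
  qed
  show "finite (hsupp (hmul n w \<gamma> f h :: bidx \<Rightarrow> 'k::field))"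
    by (rule finite_subset[OF sub]) (use assms bmul_fin in auto)
  show "\<forall>t\<in>hsupp (hmul n w \<gamma> f h :: bidx \<Rightarrow> 'k). validx n t"
    using sub bmul_nz[OF assms(1)] by (fastforce simp: hsupp_def)
qed

lemma hpow_supp:
  assumes "n > 0"
  shows "finite (hsupp (hpow n w \<gamma> (hy n w) k :: bidx \<Rightarrow> 'k::field))
      \<and> (\<forall>t\<in>hsupp (hpow n w \<gamma> (hy n w) k :: bidx \<Rightarrow> 'k). validx n t)"
proof (induction k)
  case 0
  then show ?case using assms by (simp add: hpow_0 hone_bas hsupp_bas validx_def)
next
  case (Suc k)
  then show ?case
    using hmul_supp[OF assms hy_supp(1)[OF assms], where h="hpow n w \<gamma> (hy n w) k" and w=w and \<gamma>=\<gamma>]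
    by (simp add: hpow_Suc)
qed



definition degle :: "nat \<Rightarrow> (bidx \<times> bidx \<Rightarrow> 'k::zero) \<Rightarrow> bool" where
  "degle d G \<longleftrightarrow> (\<forall>x. G x \<noteq> 0 \<longrightarrow> fst (fst x) + fst (snd x) \<le> d)"

lemma mul2_nz:
  assumes "mul2 n w \<gamma> F G (t, u) \<noteq> (0::'k::field)"
  shows "\<exists>P\<in>hsupp F. \<exists>Q\<in>hsupp G. bmul n w \<gamma> (fst P) (fst Q) t \<noteq> 0 \<and> bmul n w \<gamma> (snd P) (snd Q) u \<noteq> 0"
proof -
  from assms have "(\<Sum>P\<in>hsupp F. \<Sum>Q\<in>hsupp G.
      F P * G Q * bmul n w \<gamma> (fst P) (fst Q) t * bmul n w \<gamma> (snd P) (snd Q) u) \<noteq> 0"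
    by (simp add: mul2_def)
  then obtain P where P: "P \<in> hsupp F" "(\<Sum>Q\<in>hsupp G.
      F P * G Q * bmul n w \<gamma> (fst P) (fst Q) t * bmul n w \<gamma> (snd P) (snd Q) u) \<noteq> 0"
    using nz_sum_ex by blast
  then obtain Q where Q: "Q \<in> hsupp G" "F P * G Q * bmul n w \<gamma> (fst P) (fst Q) t * bmul n w \<gamma> (snd P) (snd Q) u \<noteq> 0"
    using nz_sum_ex by blast
  show ?thesis using P(1) Q by auto
qed

lemma mul2_nz_valid:
  assumes "n > 0" "mul2 n w \<gamma> F G x \<noteq> (0::'k::field)"
  shows "validx n (fst x) \<and> validx n (snd x)"
proof -
  obtain t u where x: "x = (t, u)" by (cases x)
  from mul2_nz[OF assms(2)[unfolded x]] obtain P Q where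
    "bmul n w \<gamma> (fst P) (fst Q) t \<noteq> (0::'k)" "bmul n w \<gamma> (snd P) (snd Q) u \<noteq> (0::'k)" by blast
  with bmul_nz[OF assms(1) this(1)] bmul_nz[OF assms(1) this(2)] show ?thesis by (simp add: x)
qed

lemma degle_mul2:
  assumes "n > 0" "degle d1 F" "degle d2 (G :: bidx \<times> bidx \<Rightarrow> 'k::field)"
  shows "degle (d1 + d2) (mul2 n w \<gamma> F G)"
  unfolding degle_def
proof (intro allI impI)
  fix x assume nz: "mul2 n w \<gamma> F G x \<noteq> 0"
  obtain t u where x: "x = (t, u)" by (cases x)
  from mul2_nz[OF nz[unfolded x]] obtain P Q where PQ: "P \<in> hsupp F" "Q \<in> hsupp G"
    "bmul n w \<gamma> (fst P) (fst Q) t \<noteq> 0" "bmul n w \<gamma> (snd P) (snd Q) u \<noteq> (0::'k)" by blast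
  have "fst t \<le> fst (fst P) + fst (fst Q)" "fst u \<le> fst (snd P) + fst (snd Q)"
    using bmul_nz[OF assms(1) PQ(3)] bmul_nz[OF assms(1) PQ(4)] by auto
  moreover have "fst (fst P) + fst (snd P) \<le> d1" using assms(2)[unfolded degle_def, rule_format, of P] PQ(1) by (simp add: hsupp_def)
  moreover have "fst (fst Q) + fst (snd Q) \<le> d2" using assms(3)[unfolded degle_def, rule_format, of Q] PQ(2) by (simp add: hsupp_def)
  ultimately show "fst (fst x) + fst (snd x) \<le> d1 + d2" by (simp add: x)
qed

lemma degle_pow2:
  assumes "n > 0" "degle 1 (F :: bidx \<times> bidx \<Rightarrow> 'k::field)"
  shows "degle a (pow2 n w \<gamma> F a)"
proof (induction a)
  case 0
  show ?case by (auto simp: pow2_def degle_def tens_def hone_bas bas_def split: if_splits)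
next
  case (Suc a)
  have "degle (1 + a) (mul2 n w \<gamma> F (pow2 n w \<gamma> F a))"
    by (rule degle_mul2[OF assms Suc])
  then show ?case by (simp add: pow2_def)
qed

lemma degle_F:
  assumes "n > 0"
  shows "degle 1 (\<lambda>P. tens (hy n w) (hg n w) P + tens (hone n w) (hy n w) P :: 'k::field)"
  unfolding degle_def
proof (intro allI impI)
  fix x :: "bidx \<times> bidx"
  obtain p q where x: "x = (p, q)" by (cases x)
  assume "tens (hy n w) (hg n w) x + tens (hone n w) (hy n w) x \<noteq> (0::'k)"
  then have "(hy n w p \<noteq> (0::'k) \<and> hg n w q \<noteq> (0::'k)) \<or> (hone n w p \<noteq> (0::'k) \<and> hy n w q \<noteq> (0::'k))"
    by (auto simp: x tens_def)
  then show "fst (fst x) + fst (snd x) \<le> 1"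
  proof
    assume h: "hy n w p \<noteq> (0::'k) \<and> hg n w q \<noteq> (0::'k)"
    then have pin: "p \<in> hsupp (hy n w :: bidx \<Rightarrow> 'k)" by (simp add: hsupp_def)
    have "fst p \<le> 1" using hy_supp(2)[OF assms pin] by (metis mod_less_eq_dividend)
    moreover have "fst q = 0" using h by (simp add: hg_bas bas_def split: if_splits)
    ultimately show ?thesis by (simp add: x)
  next
    assume h: "hone n w p \<noteq> (0::'k) \<and> hy n w q \<noteq> (0::'k)"
    then have qin: "q \<in> hsupp (hy n w :: bidx \<Rightarrow> 'k)" by (simp add: hsupp_def)
    have "fst q \<le> 1" using hy_supp(2)[OF assms qin] by (metis mod_less_eq_dividend)
    moreover have "fst p = 0" using h by (simp add: hone_bas bas_def split: if_splits)
    ultimately show ?thesis by (simp add: x)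
  qed
qed

lemma degle_M: "degle 0 (tens (mono n w 0 B C) (mono n w 0 B C) :: bidx \<times> bidx \<Rightarrow> 'k::field)"
  by (auto simp: degle_def tens_def mono_0 bas_def split: if_splits)

lemma cop_supp:
  assumes "n > 0" "cop n w \<gamma> i (p, q) \<noteq> (0::'k::field)"
  shows "validx n p \<and> validx n q \<and> fst p + fst q \<le> fst i"
proof -
  obtain a b c where i: "i = (a, b, c)" by (cases i)
  let ?F = "\<lambda>P. tens (hy n w) (hg n w) P + tens (hone n w) (hy n w) P :: 'k"
  have eq: "cop n w \<gamma> i = mul2 n w \<gamma> (pow2 n w \<gamma> ?F a) (tens (mono n w 0 (int b) c) (mono n w 0 (int b) c))"
    by (simp add: cop_def i)
  have "degle (a + 0) (cop n w \<gamma> i)"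
    unfolding eq by (rule degle_mul2[OF assms(1) degle_pow2[OF assms(1) degle_F[OF assms(1)]] degle_M])
  then have "fst p + fst q \<le> fst i" using assms(2)
    unfolding degle_def by (metis add_0_right fst_conv snd_conv i)
  moreover have "validx n p \<and> validx n q" using mul2_nz_valid[OF assms(1), of w \<gamma> _ _ "(p,q)"] assms(2) eq by auto
  ultimately show ?thesis by simp
qed

lemma cop2_supp:
  assumes "n > 0" "cop2 n w \<gamma> l (p, q, r) \<noteq> (0::'k::field)"
  shows "validx n q \<and> fst q \<le> fst l"
proof -
  from assms(2) have "(\<Sum>P\<in>hsupp (cop n w \<gamma> l).
      if snd P = r then cop n w \<gamma> l P * cop n w \<gamma> (fst P) (p, q) else 0) \<noteq> (0::'k)"
    by (simp add: cop2_def)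
  then obtain P where P: "P \<in> hsupp (cop n w \<gamma> l)"
      "(if snd P = r then cop n w \<gamma> l P * cop n w \<gamma> (fst P) (p, q) else 0) \<noteq> (0::'k)"
    using nz_sum_ex by blast
  then have c1: "cop n w \<gamma> l (fst P, snd P) \<noteq> (0::'k)" and c2: "cop n w \<gamma> (fst P) (p, q) \<noteq> (0::'k)"
    by (auto simp: hsupp_def split: if_splits)
  from cop_supp[OF assms(1) c1] cop_supp[OF assms(1) c2] show ?thesis by auto
qed



locale ydl = vector_space scale
  for scale :: "'k::field \<Rightarrow> 'v::ab_group_add \<Rightarrow> 'v" +
  fixes n w :: nat and \<gamma> :: 'k and \<rho> \<phi> :: "bidx \<Rightarrow> 'v \<Rightarrow> 'v"
  assumes n_pos: "n > 0" and gam: "\<gamma> ^ n = 1" and yd: "yd_module scale n w \<gamma> \<rho> \<phi>"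
begin

lemma gam_nz: "\<gamma> \<noteq> 0"
  using gam n_pos by (metis power_0_left zero_neq_one less_not_refl)

lemma vs: "vector_space scale" by unfold_locales

lemma lin_add: "Vector_Spaces.linear scale scale f \<Longrightarrow> f (x + y) = f x + f y"
  unfolding Vector_Spaces.linear_iff by blast
lemma lin_scale: "Vector_Spaces.linear scale scale f \<Longrightarrow> f (scale c x) = scale c (f x)"
  unfolding Vector_Spaces.linear_iff by blast
lemma lin_zero: "Vector_Spaces.linear scale scale f \<Longrightarrow> f 0 = 0"
  using lin_scale[of f 0 0] by simp
lemma lin_sum: "Vector_Spaces.linear scale scale f \<Longrightarrow> f (sum g A) = (\<Sum>x\<in>A. f (g x))"
  by (induction A rule: infinite_finite_induct) (auto simp: lin_zero lin_add)

lemma hm: "hmodule scale n w \<gamma> \<rho>" using yd by (simp add: yd_module_def)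
lemma hc: "hcomodule scale n w \<gamma> \<phi>" using yd by (simp add: yd_module_def)
lemma rho_lin: "validx n i \<Longrightarrow> Vector_Spaces.linear scale scale (\<rho> i)"
  using hm unfolding hmodule_def by blast
lemma phi_lin: "Vector_Spaces.linear scale scale (\<phi> i)"
  using hc unfolding hcomodule_def by blast
lemma hone_id: "hact scale \<rho> (hone n w) u = u"
  using hm by (simp add: hmodule_def)
lemma rho_rho: "validx n i \<Longrightarrow> validx n j \<Longrightarrow> \<rho> i (\<rho> j u) = hact scale \<rho> (bmul n w \<gamma> i j) u"
  using hm unfolding hmodule_def by blast

lemma hact_superset:
  "finite T \<Longrightarrow> hsupp h \<subseteq> T \<Longrightarrow> hact scale \<rho> h u = (\<Sum>t\<in>T. scale (h t) (\<rho> t u))"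
  unfolding hact_def by (rule sum.mono_neutral_left) (auto simp: hsupp_def)

lemma hact_bas: "hact scale \<rho> (bas i) u = \<rho> i u"
  unfolding hact_def hsupp_bas by (simp add: bas_def)

lemma rho_0: "\<rho> (0,0,0) u = u"
  using hone_id[of u] by (simp add: hone_bas hact_bas)

lemma hact_cmul: "c \<noteq> 0 \<Longrightarrow> hact scale \<rho> (\<lambda>t. c * f t) u = scale c (hact scale \<rho> f u)"
proof -
  assume c: "c \<noteq> 0"
  have "hsupp (\<lambda>t. c * f t) = hsupp f" using c by (auto simp: hsupp_def)
  then show ?thesis by (simp add: hact_def scale_sum_right)
qed

lemma hact_lincomb:
  assumes "finite K" "\<And>k. k \<in> K \<Longrightarrow> finite (hsupp (g k))"
  shows "hact scale \<rho> (\<lambda>t. \<Sum>k\<in>K. c k * g k t) u = (\<Sum>k\<in>K. scale (c k) (hact scale \<rho> (g k) u))"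
proof -
  define T where "T = (\<Union>k\<in>K. hsupp (g k))"
  have fT: "finite T" using assms by (simp add: T_def)
  have sub: "hsupp (\<lambda>t. \<Sum>k\<in>K. c k * g k t) \<subseteq> T"
  proof
    fix t assume "t \<in> hsupp (\<lambda>t. \<Sum>k\<in>K. c k * g k t)"
    then have "(\<Sum>k\<in>K. c k * g k t) \<noteq> 0" by (simp add: hsupp_def)
    then obtain k where "k \<in> K" "c k * g k t \<noteq> 0" using nz_sum_ex by blast
    then show "t \<in> T" by (auto simp: T_def hsupp_def)
  qed
  have "hact scale \<rho> (\<lambda>t. \<Sum>k\<in>K. c k * g k t) u = (\<Sum>t\<in>T. scale (\<Sum>k\<in>K. c k * g k t) (\<rho> t u))"
    by (rule hact_superset[OF fT sub])
  also have "\<dots> = (\<Sum>t\<in>T. \<Sum>k\<in>K. scale (c k) (scale (g k t) (\<rho> t u)))"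
    by (simp add: scale_sum_left)
  also have "\<dots> = (\<Sum>k\<in>K. \<Sum>t\<in>T. scale (c k) (scale (g k t) (\<rho> t u)))"
    by (rule sum.swap)
  also have "\<dots> = (\<Sum>k\<in>K. scale (c k) (hact scale \<rho> (g k) u))"
  proof (rule sum.cong[OF refl])
    fix k assume k: "k \<in> K"
    have "hact scale \<rho> (g k) u = (\<Sum>t\<in>T. scale (g k t) (\<rho> t u))"
      by (rule hact_superset[OF fT]) (use k in \<open>auto simp: T_def\<close>)
    then show "(\<Sum>t\<in>T. scale (c k) (scale (g k t) (\<rho> t u))) = scale (c k) (hact scale \<rho> (g k) u)"
      by (simp add: scale_sum_right)
  qed
  finally show ?thesis .
qed

lemma hact_expand2:
  assumes "\<forall>i\<in>hsupp f. validx n i"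
  shows "hact scale \<rho> f (hact scale \<rho> h u) =
     (\<Sum>i\<in>hsupp f. \<Sum>j\<in>hsupp h. scale (f i * h j) (\<rho> i (\<rho> j u)))"
proof -
  have "hact scale \<rho> f (hact scale \<rho> h u) = (\<Sum>i\<in>hsupp f. scale (f i) (\<rho> i (\<Sum>j\<in>hsupp h. scale (h j) (\<rho> j u))))"
    by (simp add: hact_def)
  also have "\<dots> = (\<Sum>i\<in>hsupp f. \<Sum>j\<in>hsupp h. scale (f i * h j) (\<rho> i (\<rho> j u)))"
  proof (rule sum.cong[OF refl])
    fix i assume "i \<in> hsupp f"
    then have l: "Vector_Spaces.linear scale scale (\<rho> i)" using assms rho_lin by blast
    show "scale (f i) (\<rho> i (\<Sum>j\<in>hsupp h. scale (h j) (\<rho> j u))) = (\<Sum>j\<in>hsupp h. scale (f i * h j) (\<rho> i (\<rho> j u)))"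
      by (simp add: lin_sum[OF l] lin_scale[OF l] scale_sum_right)
  qed
  finally show ?thesis .
qed

lemma hact_mul:
  assumes "finite (hsupp f)" "finite (hsupp h)" "\<forall>i\<in>hsupp f. validx n i" "\<forall>j\<in>hsupp h. validx n j"
  shows "hact scale \<rho> (hmul n w \<gamma> f h) u = hact scale \<rho> f (hact scale \<rho> h u)"
proof -
  let ?K = "hsupp f \<times> hsupp h"
  have eq: "hmul n w \<gamma> f h = (\<lambda>t. \<Sum>p\<in>?K. (f (fst p) * h (snd p)) * bmul n w \<gamma> (fst p) (snd p) t)"
    by (simp add: hmul_def sum.cartesian_product split_def)
  have "hact scale \<rho> (hmul n w \<gamma> f h) u = (\<Sum>p\<in>?K. scale (f (fst p) * h (snd p)) (hact scale \<rho> (bmul n w \<gamma> (fst p) (snd p)) u))"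
    unfolding eq by (rule hact_lincomb) (use assms bmul_fin in auto)
  also have "\<dots> = (\<Sum>p\<in>?K. scale (f (fst p) * h (snd p)) (\<rho> (fst p) (\<rho> (snd p) u)))"
    by (rule sum.cong[OF refl]) (use assms rho_rho in auto)
  also have "\<dots> = (\<Sum>i\<in>hsupp f. \<Sum>j\<in>hsupp h. scale (f i * h j) (\<rho> i (\<rho> j u)))"
    by (simp add: sum.cartesian_product split_def)
  also have "\<dots> = hact scale \<rho> f (hact scale \<rho> h u)"
    by (rule hact_expand2[symmetric]) (use assms in auto)
  finally show ?thesis .
qed

lemma hact_linear:
  assumes "\<forall>t\<in>hsupp h. validx n t"
  shows "Vector_Spaces.linear scale scale (hact scale \<rho> h)"
  unfolding Vector_Spaces.linear_iff
proof (intro conjI allI vs)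
  fix x y
  show "hact scale \<rho> h (x + y) = hact scale \<rho> h x + hact scale \<rho> h y"
    unfolding hact_def sum.distrib[symmetric]
    by (rule sum.cong[OF refl]) (use assms in \<open>simp add: lin_add[OF rho_lin] scale_right_distrib\<close>)
next
  fix c x
  show "hact scale \<rho> h (scale c x) = scale c (hact scale \<rho> h x)"
    unfolding hact_def scale_sum_right
    by (rule sum.cong[OF refl]) (use assms in \<open>simp add: lin_scale[OF rho_lin] scale_left_commute\<close>)
qed

lemma rho_comm:
  assumes "validx n (a, b, c)" "validx n (a', b', c')"
  shows "\<rho> (a, b, c) (\<rho> (a', b', c') u) =
     scale (inverse \<gamma> ^ (b * a') * \<gamma> ^ (b' * a)) (\<rho> (a', b', c') (\<rho> (a, b, c) u))"
proof -
  let ?M = "mono n w (a + a') (int (b + b')) (c + c')"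
  have nz: "inverse \<gamma> ^ k \<noteq> 0" for k using gam_nz by simp
  have e1: "\<rho> (a, b, c) (\<rho> (a', b', c') u) = scale (inverse \<gamma> ^ (b * a')) (hact scale \<rho> ?M u)"
    using rho_rho[OF assms] by (simp add: bmul_eq hact_cmul[OF nz])
  have B2: "bmul n w \<gamma> (a', b', c') (a, b, c) = (\<lambda>t. inverse \<gamma> ^ (b' * a) * ?M t)"
    unfolding bmul_eq by (simp add: ac_simps)
  have e2: "\<rho> (a', b', c') (\<rho> (a, b, c) u) = scale (inverse \<gamma> ^ (b' * a)) (hact scale \<rho> ?M u)"
    using rho_rho[OF assms(2,1)] by (simp add: B2 hact_cmul[OF nz])
  have "\<gamma> ^ (b' * a) * inverse \<gamma> ^ (b' * a) = 1" using gam_nz by (simp add: power_inverse[symmetric] field_simps)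
  then show ?thesis unfolding e1 e2 by (simp add: mult.assoc)
qed

lemma hact_comm:
  assumes "\<forall>i\<in>hsupp f. validx n i" "\<forall>j\<in>hsupp h. validx n j"
    and "\<And>i j u. i \<in> hsupp f \<Longrightarrow> j \<in> hsupp h \<Longrightarrow> \<rho> i (\<rho> j u) = scale \<kappa> (\<rho> j (\<rho> i u))"
  shows "hact scale \<rho> f (hact scale \<rho> h u) = scale \<kappa> (hact scale \<rho> h (hact scale \<rho> f u))"
proof -
  have "hact scale \<rho> f (hact scale \<rho> h u) = (\<Sum>i\<in>hsupp f. \<Sum>j\<in>hsupp h. scale (f i * h j) (\<rho> i (\<rho> j u)))"
    by (rule hact_expand2[OF assms(1)])
  also have "\<dots> = (\<Sum>i\<in>hsupp f. \<Sum>j\<in>hsupp h. scale \<kappa> (scale (h j * f i) (\<rho> j (\<rho> i u))))"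
    by (intro sum.cong refl) (simp add: assms(3) mult.commute)
  also have "\<dots> = scale \<kappa> (\<Sum>j\<in>hsupp h. \<Sum>i\<in>hsupp f. scale (h j * f i) (\<rho> j (\<rho> i u)))"
    by (simp add: scale_sum_right sum.swap[of _ "hsupp f"])
  also have "\<dots> = scale \<kappa> (hact scale \<rho> h (hact scale \<rho> f u))"
    by (subst hact_expand2[OF assms(2)]) simp
  finally show ?thesis .
qed

lemma span_lin_image:
  assumes "Vector_Spaces.linear scale scale f" "x \<in> span S" "\<And>s. s \<in> S \<Longrightarrow> f s \<in> span T"
  shows "f x \<in> span T"
  using assms(2)
proof (induction rule: span_induct_alt)
  case base
  then show ?case by (simp add: lin_zero[OF assms(1)] span_zero)
next
  case (step c x y)
  then show ?case by (simp add: lin_add[OF assms(1)] lin_scale[OF assms(1)] span_add span_scale assms(3))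
qed

lemma phi_rho:
  assumes "validx n l"
  shows "\<phi> t (\<rho> l u) \<in> span {\<rho> q (\<phi> s u) | q s. validx n q \<and> fst q \<le> fst l}"
proof -
  have eq: "\<phi> t (\<rho> l u) = (\<Sum>(p, q, r)\<in>hsupp (cop2 n w \<gamma> l). \<Sum>s\<in>{s. \<phi> s u \<noteq> 0}.
             scale (cop2 n w \<gamma> l (p, q, r) * hmul n w \<gamma> (bmul n w \<gamma> p s) (antip n w \<gamma> r) t)
                   (\<rho> q (\<phi> s u)))"
    using yd assms unfolding yd_module_def by blast
  show ?thesis unfolding eq
  proof (rule span_sum)
    fix x assume x: "x \<in> hsupp (cop2 n w \<gamma> l)"
    obtain p q r where xe: "x = (p, q, r)" by (cases x)
    have "validx n q \<and> fst q \<le> fst l" using cop2_supp[OF n_pos] x by (simp add: xe hsupp_def)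
    then have base: "\<rho> q (\<phi> s u) \<in> span {\<rho> q (\<phi> s u) | q s. validx n q \<and> fst q \<le> fst l}" for s
      by (intro span_base) blast
    show "(case x of (p, q, r) \<Rightarrow> \<Sum>s\<in>{s. \<phi> s u \<noteq> 0}.
             scale (cop2 n w \<gamma> l (p, q, r) * hmul n w \<gamma> (bmul n w \<gamma> p s) (antip n w \<gamma> r) t)
                   (\<rho> q (\<phi> s u))) \<in> span {\<rho> q (\<phi> s u) | q s. validx n q \<and> fst q \<le> fst l}"
      unfolding xe prod.case by (intro span_sum span_scale base)
  qed
qed

end


lemma bmul_bas:
  assumes "a + a' < n" "b + b' < n" "b * a' = 0"
  shows "bmul n w \<gamma> (a, b, c) (a', b', c') = bas (a + a', b + b', c + c')"
proof -
  have "mono n w (a + a') (int (b + b')) (c + c') = bas (a+a', nat (int (b+b')), c+c')"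
    by (rule mono_small) (use assms in auto)
  then have m: "mono n w (a + a') (int (b + b')) (c + c') = bas (a+a', b+b', c+c')"
    by (simp only: nat_int)
  show ?thesis unfolding bmul_eq assms(3) m by simp
qed

locale ydv = ydl +
  fixes v :: 'b and \<alpha> \<beta> :: 'a and r i :: int
  assumes std: "standard_element scale n w \<rho> \<phi> v \<alpha> \<beta> r i"
begin

abbreviation U where "U m \<equiv> hact scale \<rho> (hpow n w \<gamma> (hy n w) m) v"
abbreviation W where "W k \<equiv> span {U j | j. j \<le> k}"

lemma alpha_nz: "\<alpha> \<noteq> 0" using std by (simp add: standard_element_def)
lemma x_v: "hact scale \<rho> (hx n w) v = scale \<alpha> v" using std by (simp add: standard_element_def)
lemma g_v: "hact scale \<rho> (hg n w) v = scale \<beta> v" using std by (simp add: standard_element_def)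
lemma phi_v: "\<phi> j v = scale (mono n w 0 i r j) v" using std unfolding standard_element_def by blast

lemma hy_fin: "finite (hsupp (hy n w :: bidx \<Rightarrow> 'a))" by (rule hy_supp(1)[OF n_pos])
lemma hy_valid: "\<forall>t\<in>hsupp (hy n w :: bidx \<Rightarrow> 'a). validx n t" using hy_supp(2)[OF n_pos] by blast
lemma hpow_fin: "finite (hsupp (hpow n w \<gamma> (hy n w) k))" using hpow_supp[OF n_pos] by blast
lemma hpow_valid: "\<forall>t\<in>hsupp (hpow n w \<gamma> (hy n w) k). validx n t" using hpow_supp[OF n_pos] by blast

lemma U_0: "U 0 = v" by (simp add: hpow_0 hone_id)

lemma U_Suc: "U (Suc m) = hact scale \<rho> (hy n w) (U m)"
  unfolding hpow_Suc by (rule hact_mul[OF hy_fin hpow_fin hy_valid hpow_valid])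

lemma hy_lin: "Vector_Spaces.linear scale scale (hact scale \<rho> (hy n w))"
  by (rule hact_linear[OF hy_valid])

lemma valid_simp: "validx n (a, b, c) \<longleftrightarrow> a < n \<and> b < n" by (simp add: validx_def)

lemma rho_rho_bas:
  assumes "validx n p" "validx n q" "bmul n w \<gamma> p q = bas t"
  shows "\<rho> p (\<rho> q u) = \<rho> t u"
  using rho_rho[OF assms(1,2)] assms(3) by (simp add: hact_bas)

lemma U_x: "hact scale \<rho> (hx n w) (U m) = scale \<alpha> (U m)"
proof (induction m)
  case 0
  then show ?case using x_v by (simp add: U_0)
next
  case (Suc m)
  have "hact scale \<rho> (hx n w) (hact scale \<rho> (hy n w) (U m)) = scale 1 (hact scale \<rho> (hy n w) (hact scale \<rho> (hx n w) (U m)))"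
  proof (rule hact_comm)
    show "\<forall>i\<in>hsupp (hx n w). validx n i" using n_pos by (simp add: hx_bas hsupp_bas validx_def)
    show "\<forall>j\<in>hsupp (hy n w :: bidx \<Rightarrow> 'a). validx n j" by (rule hy_valid)
    fix p q u assume p: "p \<in> hsupp (hx n w :: bidx \<Rightarrow> 'a)" and q: "q \<in> hsupp (hy n w :: bidx \<Rightarrow> 'a)"
    obtain a b c where qe: "q = (a, b, c)" by (cases q)
    have pe: "p = (0, 0, 1)" using p by (simp add: hx_bas hsupp_bas)
    have "validx n q" "b = 0" using hy_supp(2)[OF n_pos q] by (auto simp: qe)
    then show "\<rho> p (\<rho> q u) = scale 1 (\<rho> q (\<rho> p u))"
      using rho_comm[of 0 0 1 a b c u] n_pos by (simp add: pe qe validx_def)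
  qed
  then show ?case using Suc by (simp add: U_Suc lin_scale[OF hy_lin])
qed

lemma kappa_g: "inverse \<gamma> ^ (nat (1 mod int n) * (1 mod n)) = inverse \<gamma>"
proof (cases "n = 1")
  case True
  then have "\<gamma> = 1" using gam by simp
  then show ?thesis by simp
next
  case False
  then have "n \<ge> 2" using n_pos by simp
  then show ?thesis by simp
qed

lemma U_g: "hact scale \<rho> (hg n w) (U m) = scale (\<beta> * inverse \<gamma> ^ m) (U m)"
proof (induction m)
  case 0
  then show ?case using g_v by (simp add: U_0)
next
  case (Suc m)
  have "hact scale \<rho> (hg n w) (hact scale \<rho> (hy n w) (U m)) = scale (inverse \<gamma>) (hact scale \<rho> (hy n w) (hact scale \<rho> (hg n w) (U m)))"
  proof (rule hact_comm)
    show "\<forall>i\<in>hsupp (hg n w). validx n i" using n_pos by (simp add: hg_bas hsupp_bas validx_def nat_less_iff)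
    show "\<forall>j\<in>hsupp (hy n w :: bidx \<Rightarrow> 'a). validx n j" by (rule hy_valid)
    fix p q u assume p: "p \<in> hsupp (hg n w :: bidx \<Rightarrow> 'a)" and q: "q \<in> hsupp (hy n w :: bidx \<Rightarrow> 'a)"
    obtain a b c where qe: "q = (a, b, c)" by (cases q)
    have pe: "p = (0, nat (1 mod int n), int w * (1 div int n))" using p by (simp add: hg_bas hsupp_bas)
    have vq: "validx n q" and b0: "b = 0" and a1: "a = 1 mod n" using hy_supp(2)[OF n_pos q] by (auto simp: qe)
    have vp: "validx n p" using n_pos by (simp add: pe validx_def nat_less_iff)
    show "\<rho> p (\<rho> q u) = scale (inverse \<gamma>) (\<rho> q (\<rho> p u))"
      using rho_comm[of 0 "nat (1 mod int n)" "int w * (1 div int n)" a b c u] vp vq kappa_g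
      by (simp add: pe qe b0 a1)
  qed
  then show ?case using Suc by (simp add: U_Suc lin_scale[OF hy_lin] mult_ac)
qed

lemma rho_x_U: "\<rho> (0, 0, 1) (U m) = scale \<alpha> (U m)"
  using U_x[of m] by (simp add: hx_bas hact_bas)

lemma rho_xinv_U: "\<rho> (0, 0, -1) (U m) = scale (inverse \<alpha>) (U m)"
proof -
  have v0: "validx n (0,0,c)" for c using n_pos by (simp add: validx_def)
  have "\<rho> (0, 0, -1) (\<rho> (0, 0, 1) (U m)) = \<rho> (0,0,0) (U m)"
    by (rule rho_rho_bas[OF v0 v0]) (use n_pos in \<open>simp add: bmul_bas\<close>)
  then have "scale \<alpha> (\<rho> (0, 0, -1) (U m)) = U m"
    by (simp add: rho_x_U lin_scale[OF rho_lin[OF v0]] rho_0)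
  then have "scale (inverse \<alpha>) (scale \<alpha> (\<rho> (0, 0, -1) (U m))) = scale (inverse \<alpha>) (U m)" by simp
  then show ?thesis using alpha_nz by simp
qed

lemma rho_xc_U: "\<exists>lam. \<rho> (0, 0, c) (U m) = scale lam (U m)"
proof -
  have v0: "validx n (0,0,c)" for c using n_pos by (simp add: validx_def)
  show ?thesis
  proof (induction c rule: int_induct[where k=0])
    case base
    then show ?case using rho_0 by (metis scale_one)
  next
    case (step1 c)
    then obtain l where l: "\<rho> (0, 0, c) (U m) = scale l (U m)" by blast
    have "\<rho> (0, 0, 1) (\<rho> (0, 0, c) (U m)) = \<rho> (0,0,c+1) (U m)"
      by (rule rho_rho_bas[OF v0 v0]) (use n_pos in \<open>simp add: bmul_bas add.commute\<close>)
    then have "\<rho> (0,0,c+1) (U m) = scale (l * \<alpha>) (U m)"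
      by (simp add: l lin_scale[OF rho_lin[OF v0]] rho_x_U mult.commute)
    then show ?case by blast
  next
    case (step2 c)
    then obtain l where l: "\<rho> (0, 0, c) (U m) = scale l (U m)" by blast
    have "\<rho> (0, 0, -1) (\<rho> (0, 0, c) (U m)) = \<rho> (0,0,c-1) (U m)"
      by (rule rho_rho_bas[OF v0 v0]) (use n_pos in \<open>simp add: bmul_bas\<close>)
    then have "\<rho> (0,0,c-1) (U m) = scale (l * inverse \<alpha>) (U m)"
      by (simp add: l lin_scale[OF rho_lin[OF v0]] rho_xinv_U mult.commute)
    then show ?case by blast
  qed
qed

lemma rho_gb_U: "b < n \<Longrightarrow> \<exists>lam. \<rho> (0, b, 0) (U m) = scale lam (U m)"
proof (induction b)
  case 0
  then show ?case using rho_0 by (metis scale_one)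
next
  case (Suc b)
  then obtain l where l: "\<rho> (0, b, 0) (U m) = scale l (U m)" by auto
  have n2: "n \<ge> 2" using Suc.prems by simp
  have "\<rho> (0, 1, 0) (\<rho> (0, b, 0) (U m)) = \<rho> (0, Suc b, 0) (U m)"
    by (rule rho_rho_bas) (use Suc.prems n2 in \<open>simp_all add: bmul_bas validx_def\<close>)
  moreover have "\<rho> (0, 1, 0) (U m) = scale (\<beta> * inverse \<gamma> ^ m) (U m)"
    using U_g[of m] by (simp add: hg_bas2[OF n2] hact_bas)
  moreover have "validx n (0, 1, 0)" using n2 by (simp add: validx_def)
  ultimately have "\<rho> (0, Suc b, 0) (U m) = scale (l * (\<beta> * inverse \<gamma> ^ m)) (U m)"
    by (simp add: l lin_scale[OF rho_lin] mult.commute)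
  then show ?case by blast
qed

lemma rho_ya_U: "a < n \<Longrightarrow> \<rho> (a, 0, 0) (U m) = U (m + a)"
proof (induction a)
  case 0
  then show ?case by (simp add: rho_0)
next
  case (Suc a)
  have n2: "n \<ge> 2" using Suc.prems by simp
  have "\<rho> (1, 0, 0) (\<rho> (a, 0, 0) (U m)) = \<rho> (Suc a, 0, 0) (U m)"
    by (rule rho_rho_bas) (use Suc.prems n2 in \<open>simp_all add: bmul_bas validx_def\<close>)
  moreover have "\<rho> (1, 0, 0) (U (m + a)) = U (Suc (m + a))"
  proof -
    have h: "\<rho> (1,0,0) x = hact scale \<rho> (hy n w) x" for x by (simp add: hy_bas2[OF n2] hact_bas)
    show ?thesis by (simp only: h U_Suc)
  qed
  ultimately show ?case using Suc by simp
qed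

lemma rho_U:
  assumes "validx n q"
  shows "\<exists>lam. \<rho> q (U m) = scale lam (U (m + fst q))"
proof -
  obtain a b c where qe: "q = (a, b, c)" by (cases q)
  have a: "a < n" and b: "b < n" using assms by (auto simp: qe validx_def)
  have v: "validx n (a,0,0)" "validx n (0,b,c)" "validx n (0,b,0)" "validx n (0,0,c)"
    using a b n_pos by (auto simp: validx_def)
  have e1: "\<rho> (a, 0, 0) (\<rho> (0, b, c) u) = \<rho> (a, b, c) u" for u
    by (rule rho_rho_bas[OF v(1,2)]) (use a b in \<open>simp add: bmul_bas\<close>)
  have e2: "\<rho> (0, b, 0) (\<rho> (0, 0, c) u) = \<rho> (0, b, c) u" for u
    by (rule rho_rho_bas[OF v(3,4)]) (use b n_pos in \<open>simp add: bmul_bas\<close>)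
  obtain l1 where l1: "\<rho> (0, 0, c) (U m) = scale l1 (U m)" using rho_xc_U by blast
  obtain l2 where l2: "\<rho> (0, b, 0) (U m) = scale l2 (U m)" using rho_gb_U[OF b] by blast
  have "\<rho> q (U m) = \<rho> (a, 0, 0) (\<rho> (0, b, 0) (\<rho> (0, 0, c) (U m)))" by (simp add: qe e1 e2)
  also have "\<dots> = scale (l1 * l2) (U (m + a))"
    by (simp add: l1 l2 lin_scale[OF rho_lin[OF v(1)]] lin_scale[OF rho_lin[OF v(3)]] rho_ya_U[OF a])
  finally show ?thesis by (auto simp: qe)
qed

lemma U_in_W: "j \<le> k \<Longrightarrow> U j \<in> W k"
  by (rule span_base) blast

lemma W_mono: "j \<le> k \<Longrightarrow> W j \<subseteq> W k"
  by (rule span_mono) auto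

lemma rho_W:
  assumes "validx n q" "x \<in> W j"
  shows "\<rho> q x \<in> W (j + fst q)"
proof (rule span_lin_image[OF rho_lin[OF assms(1)] assms(2)])
  fix s assume "s \<in> {U i | i. i \<le> j}"
  then obtain i0 where s: "s = U i0" "i0 \<le> j" by blast
  obtain l where "\<rho> q (U i0) = scale l (U (i0 + fst q))" using rho_U[OF assms(1)] by blast
  then show "\<rho> q s \<in> W (j + fst q)" using s by (auto intro!: span_scale U_in_W)
qed

lemma span_sub: "S \<subseteq> span T \<Longrightarrow> span S \<subseteq> span T"
  by (metis span_mono span_span)

lemma phi_U: "\<phi> t (U j) \<in> W j"
proof (induction j arbitrary: t)
  case 0
  have "v \<in> W 0" using U_in_W[of 0 0] by (simp add: U_0)
  then show ?case by (simp add: U_0 phi_v span_scale)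
next
  case (Suc j)
  have eq: "U (Suc j) = (\<Sum>l\<in>hsupp (hy n w :: bidx \<Rightarrow> 'a). scale (hy n w l) (\<rho> l (U j)))"
    by (subst U_Suc) (rule hact_def)
  have "\<phi> t (\<rho> l (U j)) \<in> W (Suc j)" if l: "l \<in> hsupp (hy n w :: bidx \<Rightarrow> 'a)" for l
  proof -
    have vl: "validx n l" and fl: "fst l \<le> 1"
      using hy_supp(2)[OF n_pos l] by (auto intro: le_trans[OF mod_less_eq_dividend])
    have "{\<rho> q (\<phi> s (U j)) | q s. validx n q \<and> fst q \<le> fst l} \<subseteq> W (Suc j)"
    proof clarify
      fix q s assume q: "validx n q" "fst q \<le> fst l"
      have "\<rho> q (\<phi> s (U j)) \<in> W (j + fst q)" by (rule rho_W[OF q(1) Suc.IH])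
      moreover have "W (j + fst q) \<subseteq> W (Suc j)" using q(2) fl by (intro W_mono) simp
      ultimately show "\<rho> q (\<phi> s (U j)) \<in> W (Suc j)" by blast
    qed
    then show ?thesis using phi_rho[OF vl, of t "U j"] span_sub by blast
  qed
  then show ?case unfolding eq
    by (auto simp: lin_sum[OF phi_lin] lin_scale[OF phi_lin] intro!: span_sum span_scale)
qed

lemma part2: "subcomodule scale \<phi> (W k)"
  unfolding subcomodule_def
proof (intro conjI allI ballI subspace_span)
  fix t x assume x: "x \<in> W k"
  show "\<phi> t x \<in> W k"
  proof (rule span_lin_image[OF phi_lin x])
    fix s assume "s \<in> {U i | i. i \<le> k}"
    then obtain i0 where s: "s = U i0" "i0 \<le> k" by blast
    then show "\<phi> t s \<in> W k" using phi_U[of t i0] W_mono[OF s(2)] by blast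
  qed
qed

lemma part3:
  assumes "U (Suc k) \<in> W k"
  shows "yd_submodule scale n \<rho> \<phi> (W k)"
proof -
  have hyW: "hact scale \<rho> (hy n w) x \<in> W k" if "x \<in> W k" for x
  proof (rule span_lin_image[OF hy_lin that])
    fix s assume "s \<in> {U i | i. i \<le> k}"
    then obtain i0 where s: "s = U i0" "i0 \<le> k" by blast
    show "hact scale \<rho> (hy n w) s \<in> W k"
    proof (cases "i0 = k")
      case True then show ?thesis using assms s by (simp add: U_Suc)
    next
      case False then show ?thesis using s by (simp add: U_Suc[symmetric] U_in_W)
    qed
  qed
  have allU: "U m \<in> W k" for m
  proof (induction m)
    case 0 then show ?case by (rule U_in_W) simp
  next
    case (Suc m) then show ?case by (simp add: U_Suc hyW)
  qed
  have rhoW: "\<rho> q x \<in> W k" if q: "validx n q" and x: "x \<in> W k" for q x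
  proof (rule span_lin_image[OF rho_lin[OF q] x])
    fix s assume "s \<in> {U i | i. i \<le> k}"
    then obtain i0 where s: "s = U i0" by blast
    obtain l where "\<rho> q (U i0) = scale l (U (i0 + fst q))" using rho_U[OF q] by blast
    then show "\<rho> q s \<in> W k" using s allU by (simp add: span_scale)
  qed
  show ?thesis unfolding yd_submodule_def using part2 rhoW by blast
qed

end

theorem proposition3p4:
  fixes scale :: "'k::field_char_0 \<Rightarrow> 'v::ab_group_add \<Rightarrow> 'v"
    and n w :: nat and \<gamma> :: 'k
    and \<rho> \<phi> :: "bidx \<Rightarrow> 'v \<Rightarrow> 'v"
    and v :: 'v and \<alpha> \<beta> :: 'k and r i :: int
  assumes alg_closed: "\<forall>p :: 'k poly. degree p \<ge> 1 \<longrightarrow> (\<exists>z. poly p z = 0)"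
    and n_pos: "n > 0" and w_pos: "w > 0"
    and prim: "\<gamma> ^ n = 1" "\<forall>m. 0 < m \<and> m < n \<longrightarrow> \<gamma> ^ m \<noteq> 1"
    and vs: "vector_space scale"
    and yd: "yd_module scale n w \<gamma> \<rho> \<phi>"
    and std: "standard_element scale n w \<rho> \<phi> v \<alpha> \<beta> r i"
  shows "\<forall>k::nat.
     hact scale \<rho> (hx n w) (hact scale \<rho> (hpow n w \<gamma> (hy n w) k) v)
        = scale \<alpha> (hact scale \<rho> (hpow n w \<gamma> (hy n w) k) v) \<and>
     hact scale \<rho> (hg n w) (hact scale \<rho> (hpow n w \<gamma> (hy n w) k) v)
        = scale (\<beta> * inverse \<gamma> ^ k) (hact scale \<rho> (hpow n w \<gamma> (hy n w) k) v) \<and>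
     subcomodule scale \<phi>
        (module.span scale {hact scale \<rho> (hpow n w \<gamma> (hy n w) j) v | j. j \<le> k}) \<and>
     (hact scale \<rho> (hpow n w \<gamma> (hy n w) (Suc k)) v
          \<in> module.span scale {hact scale \<rho> (hpow n w \<gamma> (hy n w) j) v | j. j \<le> k}
        \<longrightarrow> yd_submodule scale n \<rho> \<phi>
              (module.span scale {hact scale \<rho> (hpow n w \<gamma> (hy n w) j) v | j. j \<le> k}))"
  proof -
  interpret ydv scale n w \<gamma> \<rho> \<phi> v \<alpha> \<beta> r i
    by (rule ydv.intro[OF ydl.intro[OF vs ydl_axioms.intro[OF n_pos prim(1) yd]] ydv_axioms.intro[OF std]])
  show ?thesis using U_x U_g part2 part3 by blast
qed

end
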